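(* Let $H$ be a Hopf algebra, $E$ an $H$-comodule algebra, and $T$ an $(H,E)$-Hopf torsor. Then $T^\bullet=T^\times$.
   Context: An $H$-comodule algebra is an algebra $E$ with coaction $\Delta_E:E\to E\otimes H$ that is an algebra morphism. An $(H,E)$-Hopf module is a right $E$-module $T$ with a right $H$-coaction $\Delta_T$ such that $\Delta_T(tx)=\Delta_T(t)\Delta_E(x)$. For a right module $T$ over an algebra $A$ and $u\in T$, $\vartheta_u:A\to T$, $x\mapsto ux$, and $T^\times=\{u:\vartheta_u\text{ bijective}\}$; this applies to $T$ over $E$ and to $T\otimes H$ over $E\otimes H$. $T^\bullet=\{u\in T^\times:\Delta_T(u)\in(T\otimes H)^\times\}$. An $(H,E)$-Hopf torsor is an $(H,E)$-Hopf module $T$ with $T^\bullet\neq\emptyset$. *)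

theory Defs
  imports Complex_Main
begin

text \<open>An element of the tensor product
V (x) W is represented by a finite list of pairs [(v_1,w_1),...,(v_n,w_n)],
standing for sum_i v_i (x) w_i.  Two representatives denote the same tensor iff
every bilinear form V x W -> k takes the same total value on them (over a field,
linear functionals separate the points of V (x) W, and linear functionals on
V (x) W are exactly the bilinear forms).  Triple tensors are treated likewise
with trilinear forms.\<close>

definition bilinear_form ::
  "('k::field \<Rightarrow> 'a::ab_group_add \<Rightarrow> 'a) \<Rightarrow> ('k \<Rightarrow> 'b::ab_group_add \<Rightarrow> 'b)
    \<Rightarrow> ('a \<Rightarrow> 'b \<Rightarrow> 'k) \<Rightarrow> bool" where
  "bilinear_form s1 s2 \<beta> \<longleftrightarrow>
     (\<forall>y. Vector_Spaces.linear s1 (*) (\<lambda>x. \<beta> x y)) \<and>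
     (\<forall>x. Vector_Spaces.linear s2 (*) (\<lambda>y. \<beta> x y))"

definition trilinear_form ::
  "('k::field \<Rightarrow> 'a::ab_group_add \<Rightarrow> 'a) \<Rightarrow> ('k \<Rightarrow> 'b::ab_group_add \<Rightarrow> 'b)
    \<Rightarrow> ('k \<Rightarrow> 'c::ab_group_add \<Rightarrow> 'c) \<Rightarrow> ('a \<Rightarrow> 'b \<Rightarrow> 'c \<Rightarrow> 'k) \<Rightarrow> bool" where
  "trilinear_form s1 s2 s3 \<tau> \<longleftrightarrow>
     (\<forall>y z. Vector_Spaces.linear s1 (*) (\<lambda>x. \<tau> x y z)) \<and>
     (\<forall>x z. Vector_Spaces.linear s2 (*) (\<lambda>y. \<tau> x y z)) \<and>
     (\<forall>x y. Vector_Spaces.linear s3 (*) (\<lambda>z. \<tau> x y z))"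

definition tensor_eq2 ::
  "('k::field \<Rightarrow> 'a::ab_group_add \<Rightarrow> 'a) \<Rightarrow> ('k \<Rightarrow> 'b::ab_group_add \<Rightarrow> 'b)
    \<Rightarrow> ('a \<times> 'b) list \<Rightarrow> ('a \<times> 'b) list \<Rightarrow> bool" where
  "tensor_eq2 s1 s2 xs ys \<longleftrightarrow>
     (\<forall>\<beta>. bilinear_form s1 s2 \<beta> \<longrightarrow>
        sum_list (map (\<lambda>(a,b). \<beta> a b) xs) = sum_list (map (\<lambda>(a,b). \<beta> a b) ys))"

definition tensor_eq3 ::
  "('k::field \<Rightarrow> 'a::ab_group_add \<Rightarrow> 'a) \<Rightarrow> ('k \<Rightarrow> 'b::ab_group_add \<Rightarrow> 'b)
    \<Rightarrow> ('k \<Rightarrow> 'c::ab_group_add \<Rightarrow> 'c)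
    \<Rightarrow> ('a \<times> 'b \<times> 'c) list \<Rightarrow> ('a \<times> 'b \<times> 'c) list \<Rightarrow> bool" where
  "tensor_eq3 s1 s2 s3 xs ys \<longleftrightarrow>
     (\<forall>\<tau>. trilinear_form s1 s2 s3 \<tau> \<longrightarrow>
        sum_list (map (\<lambda>(a,b,c). \<tau> a b c) xs) = sum_list (map (\<lambda>(a,b,c). \<tau> a b c) ys))"

definition tensor_mult ::
  "('a \<Rightarrow> 'c \<Rightarrow> 'a) \<Rightarrow> ('a \<times> 'b::times) list \<Rightarrow> ('c \<times> 'b) list \<Rightarrow> ('a \<times> 'b) list" where
  "tensor_mult act xs ys = concat (map (\<lambda>(a,b). map (\<lambda>(c,d). (act a c, b * d)) ys) xs)"

definition tensor_map_left ::
  "('a \<Rightarrow> ('a1 \<times> 'a2) list) \<Rightarrow> ('a \<times> 'b) list \<Rightarrow> ('a1 \<times> 'a2 \<times> 'b) list" where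
  "tensor_map_left f xs = concat (map (\<lambda>(a,b). map (\<lambda>(a1,a2). (a1,a2,b)) (f a)) xs)"

definition tensor_map_right ::
  "('b \<Rightarrow> ('b1 \<times> 'b2) list) \<Rightarrow> ('a \<times> 'b) list \<Rightarrow> ('a \<times> 'b1 \<times> 'b2) list" where
  "tensor_map_right g xs = concat (map (\<lambda>(a,b). map (\<lambda>(b1,b2). (a,b1,b2)) (g b)) xs)"

definition tensor_valued_linear ::
  "('k::field \<Rightarrow> 'v::ab_group_add \<Rightarrow> 'v) \<Rightarrow> ('k \<Rightarrow> 'a::ab_group_add \<Rightarrow> 'a)
    \<Rightarrow> ('k \<Rightarrow> 'b::ab_group_add \<Rightarrow> 'b) \<Rightarrow> ('v \<Rightarrow> ('a \<times> 'b) list) \<Rightarrow> bool" where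
  "tensor_valued_linear s s1 s2 f \<longleftrightarrow>
     (\<forall>x y. tensor_eq2 s1 s2 (f (x + y)) (f x @ f y)) \<and>
     (\<forall>c x. tensor_eq2 s1 s2 (f (s c x)) (map (\<lambda>(a,b). (s1 c a, b)) (f x)))"

definition k_algebra :: "('k::field \<Rightarrow> 'a::ring_1 \<Rightarrow> 'a) \<Rightarrow> bool" where
  "k_algebra s \<longleftrightarrow> vector_space s \<and>
     (\<forall>c x y. s c (x * y) = s c x * y \<and> s c (x * y) = x * s c y)"

definition hopf_algebra ::
  "('k::field \<Rightarrow> 'h::ring_1 \<Rightarrow> 'h) \<Rightarrow> ('h \<Rightarrow> ('h \<times> 'h) list) \<Rightarrow> ('h \<Rightarrow> 'k) \<Rightarrow> bool" where
  "hopf_algebra s \<Delta> \<epsilon> \<longleftrightarrow>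
     k_algebra s \<and>
     \<comment> \<open>coalgebra\<close>
     tensor_valued_linear s s s \<Delta> \<and>
     Vector_Spaces.linear s (*) \<epsilon> \<and>
     (\<forall>h. tensor_eq3 s s s (tensor_map_left \<Delta> (\<Delta> h)) (tensor_map_right \<Delta> (\<Delta> h))) \<and>
     (\<forall>h. sum_list (map (\<lambda>(a,b). s (\<epsilon> a) b) (\<Delta> h)) = h) \<and>
     (\<forall>h. sum_list (map (\<lambda>(a,b). s (\<epsilon> b) a) (\<Delta> h)) = h) \<and>
     \<comment> \<open>bialgebra: \<Delta> and \<epsilon> are algebra morphisms\<close>
     (\<forall>x y. tensor_eq2 s s (\<Delta> (x * y)) (tensor_mult (*) (\<Delta> x) (\<Delta> y))) \<and>
     tensor_eq2 s s (\<Delta> 1) [(1, 1)] \<and>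
     (\<forall>x y. \<epsilon> (x * y) = \<epsilon> x * \<epsilon> y) \<and> \<epsilon> 1 = 1 \<and>
     \<comment> \<open>existence of an antipode\<close>
     (\<exists>S. Vector_Spaces.linear s s S \<and>
        (\<forall>h. sum_list (map (\<lambda>(a,b). S a * b) (\<Delta> h)) = s (\<epsilon> h) 1) \<and>
        (\<forall>h. sum_list (map (\<lambda>(a,b). a * S b) (\<Delta> h)) = s (\<epsilon> h) 1))"

definition right_comodule ::
  "('k::field \<Rightarrow> 'h::ring_1 \<Rightarrow> 'h) \<Rightarrow> ('h \<Rightarrow> ('h \<times> 'h) list) \<Rightarrow> ('h \<Rightarrow> 'k)
    \<Rightarrow> ('k \<Rightarrow> 'v::ab_group_add \<Rightarrow> 'v) \<Rightarrow> ('v \<Rightarrow> ('v \<times> 'h) list) \<Rightarrow> bool" where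
  "right_comodule sH \<Delta> \<epsilon> sV \<Delta>V \<longleftrightarrow>
     vector_space sV \<and>
     tensor_valued_linear sV sV sH \<Delta>V \<and>
     (\<forall>v. tensor_eq3 sV sH sH (tensor_map_left \<Delta>V (\<Delta>V v)) (tensor_map_right \<Delta> (\<Delta>V v))) \<and>
     (\<forall>v. sum_list (map (\<lambda>(a,b). sV (\<epsilon> b) a) (\<Delta>V v)) = v)"

definition comodule_algebra ::
  "('k::field \<Rightarrow> 'h::ring_1 \<Rightarrow> 'h) \<Rightarrow> ('h \<Rightarrow> ('h \<times> 'h) list) \<Rightarrow> ('h \<Rightarrow> 'k)
    \<Rightarrow> ('k \<Rightarrow> 'e::ring_1 \<Rightarrow> 'e) \<Rightarrow> ('e \<Rightarrow> ('e \<times> 'h) list) \<Rightarrow> bool" where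
  "comodule_algebra sH \<Delta> \<epsilon> sE \<Delta>E \<longleftrightarrow>
     k_algebra sE \<and> right_comodule sH \<Delta> \<epsilon> sE \<Delta>E \<and>
     (\<forall>x y. tensor_eq2 sE sH (\<Delta>E (x * y)) (tensor_mult (*) (\<Delta>E x) (\<Delta>E y))) \<and>
     tensor_eq2 sE sH (\<Delta>E 1) [(1, 1)]"

definition right_module ::
  "('k::field \<Rightarrow> 'e::ring_1 \<Rightarrow> 'e) \<Rightarrow> ('k \<Rightarrow> 't::ab_group_add \<Rightarrow> 't)
    \<Rightarrow> ('t \<Rightarrow> 'e \<Rightarrow> 't) \<Rightarrow> bool" where
  "right_module sE sT act \<longleftrightarrow>
     vector_space sT \<and>
     (\<forall>t. Vector_Spaces.linear sE sT (act t)) \<and>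
     (\<forall>x. Vector_Spaces.linear sT sT (\<lambda>t. act t x)) \<and>
     (\<forall>t. act t 1 = t) \<and>
     (\<forall>t x y. act (act t x) y = act t (x * y))"

definition hopf_module ::
  "('k::field \<Rightarrow> 'h::ring_1 \<Rightarrow> 'h) \<Rightarrow> ('h \<Rightarrow> ('h \<times> 'h) list) \<Rightarrow> ('h \<Rightarrow> 'k)
    \<Rightarrow> ('k \<Rightarrow> 'e::ring_1 \<Rightarrow> 'e) \<Rightarrow> ('e \<Rightarrow> ('e \<times> 'h) list)
    \<Rightarrow> ('k \<Rightarrow> 't::ab_group_add \<Rightarrow> 't) \<Rightarrow> ('t \<Rightarrow> 'e \<Rightarrow> 't) \<Rightarrow> ('t \<Rightarrow> ('t \<times> 'h) list) \<Rightarrow> bool" where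
  "hopf_module sH \<Delta> \<epsilon> sE \<Delta>E sT act \<Delta>T \<longleftrightarrow>
     right_module sE sT act \<and> right_comodule sH \<Delta> \<epsilon> sT \<Delta>T \<and>
     (\<forall>t x. tensor_eq2 sT sH (\<Delta>T (act t x)) (tensor_mult act (\<Delta>T t) (\<Delta>E x)))"

definition module_units :: "('t \<Rightarrow> 'e \<Rightarrow> 't) \<Rightarrow> 't set" where
  "module_units act = {u. bij (\<lambda>x. act u x)}"

text \<open>(T (x) H)^x: w such that \<vartheta>_w : E (x) H -> T (x) H, x |-> w x, is bijective
  (as a map between tensor products, i.e. on equivalence classes of representatives).\<close>
definition tensor_module_units ::
  "('k::field \<Rightarrow> 'e::ring_1 \<Rightarrow> 'e) \<Rightarrow> ('k \<Rightarrow> 'h::ring_1 \<Rightarrow> 'h) \<Rightarrow> ('k \<Rightarrow> 't::ab_group_add \<Rightarrow> 't)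
    \<Rightarrow> ('t \<Rightarrow> 'e \<Rightarrow> 't) \<Rightarrow> ('t \<times> 'h) list set" where
  "tensor_module_units sE sH sT act =
     {w. (\<forall>z. \<exists>x. tensor_eq2 sT sH (tensor_mult act w x) z) \<and>
         (\<forall>x y. tensor_eq2 sT sH (tensor_mult act w x) (tensor_mult act w y)
                  \<longrightarrow> tensor_eq2 sE sH x y)}"

definition bullet_units ::
  "('k::field \<Rightarrow> 'e::ring_1 \<Rightarrow> 'e) \<Rightarrow> ('k \<Rightarrow> 'h::ring_1 \<Rightarrow> 'h) \<Rightarrow> ('k \<Rightarrow> 't::ab_group_add \<Rightarrow> 't)
    \<Rightarrow> ('t \<Rightarrow> 'e \<Rightarrow> 't) \<Rightarrow> ('t \<Rightarrow> ('t \<times> 'h) list) \<Rightarrow> 't set" where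
  "bullet_units sE sH sT act \<Delta>T =
     {u \<in> module_units act. \<Delta>T u \<in> tensor_module_units sE sH sT act}"

definition hopf_torsor ::
  "('k::field \<Rightarrow> 'h::ring_1 \<Rightarrow> 'h) \<Rightarrow> ('h \<Rightarrow> ('h \<times> 'h) list) \<Rightarrow> ('h \<Rightarrow> 'k)
    \<Rightarrow> ('k \<Rightarrow> 'e::ring_1 \<Rightarrow> 'e) \<Rightarrow> ('e \<Rightarrow> ('e \<times> 'h) list)
    \<Rightarrow> ('k \<Rightarrow> 't::ab_group_add \<Rightarrow> 't) \<Rightarrow> ('t \<Rightarrow> 'e \<Rightarrow> 't) \<Rightarrow> ('t \<Rightarrow> ('t \<times> 'h) list) \<Rightarrow> bool" where
  "hopf_torsor sH \<Delta> \<epsilon> sE \<Delta>E sT act \<Delta>T \<longleftrightarrow>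
     hopf_module sH \<Delta> \<epsilon> sE \<Delta>E sT act \<Delta>T \<and> bullet_units sE sH sT act \<Delta>T \<noteq> {}"

end

theory Submission
  imports Defs
begin

lemma teq_refl: "tensor_eq2 s1 s2 x x" by (simp add: tensor_eq2_def)
lemma teq_sym: "tensor_eq2 s1 s2 x y \<Longrightarrow> tensor_eq2 s1 s2 y x" by (simp add: tensor_eq2_def)
lemma teq_trans: "tensor_eq2 s1 s2 x y \<Longrightarrow> tensor_eq2 s1 s2 y z \<Longrightarrow> tensor_eq2 s1 s2 x z"
  by (simp add: tensor_eq2_def)

lemma lin_sum:
  fixes s :: "'k::field \<Rightarrow> 'v::ab_group_add \<Rightarrow> 'v"
  assumes "vector_space s" "vector_space ((*)::'k\<Rightarrow>'k\<Rightarrow>'k)"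
    "\<forall>i\<in>set xs. Vector_Spaces.linear s (*) (f i)"
  shows "Vector_Spaces.linear s (*) (\<lambda>v. sum_list (map (\<lambda>i. f i v) xs))"
  using assms(3)
proof (induction xs)
  case Nil then show ?case using assms(1,2) by (simp add: Vector_Spaces.linear_iff)
next
  case (Cons a xs)
  then have "Vector_Spaces.linear s (*) (f a)" "Vector_Spaces.linear s (*) (\<lambda>v. sum_list (map (\<lambda>i. f i v) xs))"
    by auto
  then show ?case by (simp add: Vector_Spaces.linear_iff algebra_simps)
qed

lemma sum_tm:
  "sum_list (map (\<lambda>(a,b). \<beta> a b) (tensor_mult act w x)) =
   sum_list (map (\<lambda>(t,h). sum_list (map (\<lambda>(c,d). \<beta> (act t c) (h*d)) x)) w)"
  by (induction w) (auto simp: tensor_mult_def o_def case_prod_unfold)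

lemma sum_swap:
  fixes g :: "'a \<Rightarrow> 'b \<Rightarrow> 'r::comm_monoid_add"
  shows "sum_list (map (\<lambda>a. sum_list (map (g a) ys)) xs) =
   sum_list (map (\<lambda>b. sum_list (map (\<lambda>a. g a b) xs)) ys)"
proof (induction xs)
  case Nil then show ?case by (induction ys) auto
next
  case (Cons a xs) then show ?case by (simp add: sum_list_addf[of "g a" "\<lambda>b. sum_list (map (\<lambda>a. g a b) xs)" ys])
qed

lemma sum_tm2:
  fixes \<beta> :: "'a \<Rightarrow> 'b::times \<Rightarrow> 'r::comm_monoid_add"
  shows "sum_list (map (\<lambda>(a,b). \<beta> a b) (tensor_mult act w x)) =
   sum_list (map (\<lambda>(c,d). sum_list (map (\<lambda>(t,h). \<beta> (act t c) (h*d)) w)) x)"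
  unfolding sum_tm using sum_swap[of "\<lambda>(t,h) (c,d). \<beta> (act t c) (h*d)" x w]
  by (simp add: case_prod_unfold)

lemma lin_comp:
  "Vector_Spaces.linear s1 s2 f \<Longrightarrow> Vector_Spaces.linear s2 s3 g \<Longrightarrow> Vector_Spaces.linear s1 s3 (\<lambda>x. g (f x))"
  using Vector_Spaces.linear_compose[of s1 s2 f s3 g] by (simp add: o_def)

lemma L1:
  fixes s1 :: "'k::field \<Rightarrow> 'a::ab_group_add \<Rightarrow> 'a" and s2 :: "'k \<Rightarrow> 'b::ring_1 \<Rightarrow> 'b"
    and act :: "'a \<Rightarrow> 'c \<Rightarrow> 'a"
  assumes vs: "vector_space s1" "vector_space s2" "vector_space ((*)::'k\<Rightarrow>'k\<Rightarrow>'k)"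
    and la: "\<forall>c. Vector_Spaces.linear s1 s1 (\<lambda>t. act t c)"
    and lh: "\<forall>d. Vector_Spaces.linear s2 s2 (\<lambda>h. h*d)"
    and eq: "tensor_eq2 s1 s2 w w'"
  shows "tensor_eq2 s1 s2 (tensor_mult act w x) (tensor_mult act w' x)"
  unfolding tensor_eq2_def
proof (intro allI impI)
  fix \<beta> :: "'a \<Rightarrow> 'b \<Rightarrow> 'k"
  assume b: "bilinear_form s1 s2 \<beta>"
  define \<beta>' where "\<beta>' t h = sum_list (map (\<lambda>(c,d). \<beta> (act t c) (h*d)) x)" for t h
  have "bilinear_form s1 s2 \<beta>'"
    unfolding bilinear_form_def \<beta>'_def
  proof (intro conjI allI)
    fix h
    show "Vector_Spaces.linear s1 (*) (\<lambda>t. sum_list (map (\<lambda>(c,d). \<beta> (act t c) (h*d)) x))"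
      using lin_sum[OF vs(1,3), of x "\<lambda>(c,d) t. \<beta> (act t c) (h*d)"]
        lin_comp[OF la[rule_format], of _ "\<lambda>v. \<beta> v _"] b
      by (auto simp: case_prod_unfold bilinear_form_def)
  next
    fix t
    show "Vector_Spaces.linear s2 (*) (\<lambda>h. sum_list (map (\<lambda>(c,d). \<beta> (act t c) (h*d)) x))"
      using lin_sum[OF vs(2,3), of x "\<lambda>(c,d) h. \<beta> (act t c) (h*d)"]
        lin_comp[OF lh[rule_format], of _ "\<lambda>v. \<beta> _ v"] b
      by (auto simp: case_prod_unfold bilinear_form_def)
  qed
  then show "sum_list (map (\<lambda>(a,b). \<beta> a b) (tensor_mult act w x)) =
             sum_list (map (\<lambda>(a,b). \<beta> a b) (tensor_mult act w' x))"
    using eq unfolding sum_tm tensor_eq2_def \<beta>'_def by blast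
qed

lemma L2:
  fixes s1 :: "'k::field \<Rightarrow> 'a::ab_group_add \<Rightarrow> 'a" and s2 :: "'k \<Rightarrow> 'b::ring_1 \<Rightarrow> 'b"
    and s3 :: "'k \<Rightarrow> 'c::ab_group_add \<Rightarrow> 'c"
    and act :: "'a \<Rightarrow> 'c \<Rightarrow> 'a"
  assumes vs: "vector_space s3" "vector_space s2" "vector_space ((*)::'k\<Rightarrow>'k\<Rightarrow>'k)"
    and la: "\<forall>t. Vector_Spaces.linear s3 s1 (act t)"
    and lh: "\<forall>g. Vector_Spaces.linear s2 s2 (\<lambda>h. g*h)"
    and eq: "tensor_eq2 s3 s2 x x'"
  shows "tensor_eq2 s1 s2 (tensor_mult act w x) (tensor_mult act w x')"
  unfolding tensor_eq2_def
proof (intro allI impI)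
  fix \<beta> :: "'a \<Rightarrow> 'b \<Rightarrow> 'k"
  assume b: "bilinear_form s1 s2 \<beta>"
  define \<beta>' where "\<beta>' c d = sum_list (map (\<lambda>(t,h). \<beta> (act t c) (h*d)) w)" for c d
  have "bilinear_form s3 s2 \<beta>'"
    unfolding bilinear_form_def \<beta>'_def
  proof (intro conjI allI)
    fix d
    show "Vector_Spaces.linear s3 (*) (\<lambda>c. sum_list (map (\<lambda>(t,h). \<beta> (act t c) (h*d)) w))"
      using lin_sum[OF vs(1,3), of w "\<lambda>(t,h) c. \<beta> (act t c) (h*d)"]
        lin_comp[OF la[rule_format], of _ "\<lambda>v. \<beta> v _"] b
      by (auto simp: case_prod_unfold bilinear_form_def)
  next
    fix c
    show "Vector_Spaces.linear s2 (*) (\<lambda>d. sum_list (map (\<lambda>(t,h). \<beta> (act t c) (h*d)) w))"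
      using lin_sum[OF vs(2,3), of w "\<lambda>(t,h) d. \<beta> (act t c) (h*d)"]
        lin_comp[OF lh[rule_format], of _ "\<lambda>v. \<beta> _ v"] b
      by (auto simp: case_prod_unfold bilinear_form_def)
  qed
  then show "sum_list (map (\<lambda>(a,b). \<beta> a b) (tensor_mult act w x)) =
             sum_list (map (\<lambda>(a,b). \<beta> a b) (tensor_mult act w x'))"
    using eq unfolding sum_tm2 tensor_eq2_def \<beta>'_def by blast
qed

lemma tm_assoc:
  fixes act :: "'a \<Rightarrow> 'c::semigroup_mult \<Rightarrow> 'a"
  assumes "\<forall>t c e. act (act t c) e = act t (c*e)"
  shows "tensor_mult act (tensor_mult act w a) (b :: ('c \<times> 'b::semigroup_mult) list)
       = tensor_mult act w (tensor_mult (*) a b)"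
proof (induction w)
  case Nil then show ?case by (simp add: tensor_mult_def)
next
  case (Cons p w)
  have "tensor_mult act (map (\<lambda>(c,d). (act (fst p) c, snd p * d)) a) b =
        map (\<lambda>(c, d). (act (fst p) c, snd p * d)) (tensor_mult (*) a b)"
    by (induction a) (auto simp: tensor_mult_def assms mult.assoc)
  then show ?case using Cons
    by (auto simp: tensor_mult_def case_prod_unfold)
qed

lemma tm_one: "tensor_mult (*) [(1::'a::monoid_mult, 1::'b::monoid_mult)] z = z"
  by (induction z) (auto simp: tensor_mult_def)

lemma kalg_lin:
  assumes "k_algebra s"
  shows "Vector_Spaces.linear s s (\<lambda>h. h*d)" "Vector_Spaces.linear s s (\<lambda>h. g*h)"
proof -
  have v: "vector_space s" and m: "\<forall>c x y. s c (x * y) = s c x * y \<and> s c (x * y) = x * s c y"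
    using assms unfolding k_algebra_def by blast+
  show "Vector_Spaces.linear s s (\<lambda>h. h*d)"
    by (simp add: Vector_Spaces.linear_iff v distrib_right, metis m)
  show "Vector_Spaces.linear s s (\<lambda>h. g*h)"
    by (simp add: Vector_Spaces.linear_iff v distrib_left, metis m)
qed

theorem lemma3p3:
  fixes sH :: "'k::field \<Rightarrow> 'h::ring_1 \<Rightarrow> 'h"
    and \<Delta> :: "'h \<Rightarrow> ('h \<times> 'h) list" and \<epsilon> :: "'h \<Rightarrow> 'k"
    and sE :: "'k \<Rightarrow> 'e::ring_1 \<Rightarrow> 'e" and \<Delta>E :: "'e \<Rightarrow> ('e \<times> 'h) list"
    and sT :: "'k \<Rightarrow> 't::ab_group_add \<Rightarrow> 't" and act :: "'t \<Rightarrow> 'e \<Rightarrow> 't"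
    and \<Delta>T :: "'t \<Rightarrow> ('t \<times> 'h) list"
  assumes "hopf_algebra sH \<Delta> \<epsilon>"
    and "comodule_algebra sH \<Delta> \<epsilon> sE \<Delta>E"
    and "hopf_torsor sH \<Delta> \<epsilon> sE \<Delta>E sT act \<Delta>T"
  shows "bullet_units sE sH sT act \<Delta>T = module_units act"
proof
  show "bullet_units sE sH sT act \<Delta>T \<subseteq> module_units act" by (auto simp: bullet_units_def)
next
  have kH: "k_algebra sH" and vk: "vector_space ((*)::'k\<Rightarrow>'k\<Rightarrow>'k)"
    using assms(1) by (auto simp: hopf_algebra_def Vector_Spaces.linear_iff)
  have kE: "k_algebra sE" and eqm: "\<forall>x y. tensor_eq2 sE sH (\<Delta>E (x * y)) (tensor_mult (*) (\<Delta>E x) (\<Delta>E y))"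
    and eq1: "tensor_eq2 sE sH (\<Delta>E 1) [(1, 1)]"
    using assms(2) by (auto simp: comodule_algebra_def)
  have rm: "right_module sE sT act" and hm: "\<forall>t x. tensor_eq2 sT sH (\<Delta>T (act t x)) (tensor_mult act (\<Delta>T t) (\<Delta>E x))"
    using assms(3) by (auto simp: hopf_torsor_def hopf_module_def)
  obtain u0 where u0: "u0 \<in> bullet_units sE sH sT act \<Delta>T"
    using assms(3) by (auto simp: hopf_torsor_def)
  have vH: "vector_space sH" and vE: "vector_space sE" using kH kE by (auto simp: k_algebra_def)
  have vT: "vector_space sT" and laT: "\<forall>t. Vector_Spaces.linear sE sT (act t)"
    and laT2: "\<forall>x. Vector_Spaces.linear sT sT (\<lambda>t. act t x)"
    and act1: "\<forall>t. act t 1 = t" and actA: "\<forall>t x y. act (act t x) y = act t (x * y)"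
    using rm by (auto simp: right_module_def)
  note linH = kalg_lin[OF kH] and linE = kalg_lin[OF kE]
  have L1T: "\<And>w w' x. tensor_eq2 sT sH w w' \<Longrightarrow> tensor_eq2 sT sH (tensor_mult act w x) (tensor_mult act w' x)"
    by (rule L1[OF vT vH vk laT2]) (use linH in auto)
  have L2T: "\<And>w x x'. tensor_eq2 sE sH x x' \<Longrightarrow> tensor_eq2 sT sH (tensor_mult act w x) (tensor_mult act w x')"
    by (rule L2[OF vE vH vk laT]) (use linH in auto)
  have L1E: "\<And>w w' x. tensor_eq2 sE sH w w' \<Longrightarrow> tensor_eq2 sE sH (tensor_mult (*) w x) (tensor_mult (*) w' x)"
    by (rule L1[OF vE vH vk]) (use linH linE in auto)
  have L2E: "\<And>w x x'. tensor_eq2 sE sH x x' \<Longrightarrow> tensor_eq2 sE sH (tensor_mult (*) w x) (tensor_mult (*) w x')"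
    by (rule L2[OF vE vH vk]) (use linH linE in auto)
  have assT: "\<And>w a b. tensor_mult act (tensor_mult act w a) b = tensor_mult act w (tensor_mult (*) a (b::('e\<times>'h) list))"
    by (rule tm_assoc) (use actA in auto)
  have assE: "\<And>w a b. tensor_mult (*) (tensor_mult (*) w a) b = tensor_mult (*) w (tensor_mult (*) a (b::('e\<times>'h) list))"
    by (rule tm_assoc) (auto simp: mult.assoc)
  show "module_units act \<subseteq> bullet_units sE sH sT act \<Delta>T"
  proof
    fix u assume u: "u \<in> module_units act"
    have bu: "bij (act u)" using u by (simp add: module_units_def)
    have bu0: "bij (act u0)" and W0: "\<Delta>T u0 \<in> tensor_module_units sE sH sT act"
      using u0 by (auto simp: bullet_units_def module_units_def)
    obtain x where x: "act u0 x = u" using bu0 by (metis bij_pointE)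
    obtain y where y: "act u y = u0" using bu by (metis bij_pointE)
    have yx: "y * x = 1"
    proof -
      have "act u (y*x) = act u 1" using actA x y act1 by metis
      then show ?thesis using bu by (auto dest: bij_is_inj injD)
    qed
    have xy: "x * y = 1"
    proof -
      have "act u0 (x*y) = act u0 1" using actA x y act1 by metis
      then show ?thesis using bu0 by (auto dest: bij_is_inj injD)
    qed
    define W0' where "W0' = \<Delta>T u0"
    define X where "X = \<Delta>E x"
    define Y where "Y = \<Delta>E y"
    have XY: "tensor_eq2 sE sH (tensor_mult (*) X Y) [(1,1)]"
      using eqm eq1 xy unfolding X_def Y_def by (metis teq_sym teq_trans)
    have YX: "tensor_eq2 sE sH (tensor_mult (*) Y X) [(1,1)]"
      using eqm eq1 yx unfolding X_def Y_def by (metis teq_sym teq_trans)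
    have W: "tensor_eq2 sT sH (\<Delta>T u) (tensor_mult act W0' X)"
      using hm x unfolding W0'_def X_def by metis
    have key: "\<And>z. tensor_eq2 sT sH (tensor_mult act (\<Delta>T u) z) (tensor_mult act W0' (tensor_mult (*) X z))"
      using L1T[OF W] assT by metis
    have W0s: "\<forall>z. \<exists>p. tensor_eq2 sT sH (tensor_mult act W0' p) z"
      and W0i: "\<forall>p q. tensor_eq2 sT sH (tensor_mult act W0' p) (tensor_mult act W0' q) \<longrightarrow> tensor_eq2 sE sH p q"
      using W0 unfolding W0'_def tensor_module_units_def by auto
    have "\<Delta>T u \<in> tensor_module_units sE sH sT act"
      unfolding tensor_module_units_def
    proof (intro CollectI conjI allI impI)
      fix z
      obtain p where p: "tensor_eq2 sT sH (tensor_mult act W0' p) z" using W0s by blast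
      have "tensor_eq2 sE sH (tensor_mult (*) X (tensor_mult (*) Y p)) p"
        using L1E[OF XY, of p] assE tm_one by metis
      then have "tensor_eq2 sT sH (tensor_mult act W0' (tensor_mult (*) X (tensor_mult (*) Y p)))
                   (tensor_mult act W0' p)" by (rule L2T)
      then show "\<exists>q. tensor_eq2 sT sH (tensor_mult act (\<Delta>T u) q) z"
        using key p by (meson teq_trans)
    next
      fix p q
      assume "tensor_eq2 sT sH (tensor_mult act (\<Delta>T u) p) (tensor_mult act (\<Delta>T u) q)"
      then have "tensor_eq2 sT sH (tensor_mult act W0' (tensor_mult (*) X p)) (tensor_mult act W0' (tensor_mult (*) X q))"
        using key by (meson teq_sym teq_trans)
      then have "tensor_eq2 sE sH (tensor_mult (*) X p) (tensor_mult (*) X q)" using W0i by blast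
      then have "tensor_eq2 sE sH (tensor_mult (*) Y (tensor_mult (*) X p)) (tensor_mult (*) Y (tensor_mult (*) X q))"
        by (rule L2E)
      moreover have "\<And>r. tensor_eq2 sE sH (tensor_mult (*) Y (tensor_mult (*) X r)) r"
        using L1E[OF YX] assE tm_one by metis
      ultimately show "tensor_eq2 sE sH p q" by (meson teq_sym teq_trans)
    qed
    then show "u \<in> bullet_units sE sH sT act \<Delta>T" using u by (simp add: bullet_units_def)
  qed
qed

end
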